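(* Let $T>0$, $\alpha>0$ and $\hat\beta<0$ be constants, and let $\hat\varphi:\mathbb{R}\to\mathbb{R}$ be a continuous $T$-periodic function with $\int_0^T\hat\varphi(s)\,ds=0$. Assume $$\frac{1}{T}\int_0^T\Big(\int_0^\tau\hat\varphi(s)\,ds\Big)^2d\tau>\Big(\frac{1}{T}\int_0^T\tau\,\hat\varphi(\tau)\,d\tau\Big)^2-\hat\beta .$$ Then there exists a number $\mu_0>0$ such that for every $\mu\in(0,\mu_0]$ the zero solution of the linear equation $$y''+\alpha\mu y'+(\hat\beta\mu^2+\mu\hat\varphi(t))\,y=0$$ is asymptotically stable.
   Context: Asymptotic stability is meant in the Lyapunov sense for the equivalent first-order system in $(y,y')$. *)

theory Defs
  imports "HOL-Analysis.Analysis"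
begin

text \<open>Solutions on [t0, infinity) of the first-order system equivalent to
  y'' + a y' + q(t) y = 0, in the variables (y, v) with v = y'.\<close>
definition lin2_solution ::
  "real \<Rightarrow> (real \<Rightarrow> real) \<Rightarrow> real \<Rightarrow> (real \<Rightarrow> real) \<Rightarrow> (real \<Rightarrow> real) \<Rightarrow> bool" where
  "lin2_solution a q t0 y v \<longleftrightarrow>
     (\<forall>t\<ge>t0. (y has_real_derivative v t) (at t within {t0..}) \<and>
              (v has_real_derivative (- a * v t - q t * y t)) (at t within {t0..}))"

definition zero_asympt_stable :: "real \<Rightarrow> (real \<Rightarrow> real) \<Rightarrow> bool" where
  "zero_asympt_stable a q \<longleftrightarrow>
     (\<forall>t0. \<forall>\<epsilon>>0. \<exists>\<delta>>0. \<forall>y v. lin2_solution a q t0 y v \<and> norm (y t0, v t0) < \<delta>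
          \<longrightarrow> (\<forall>t\<ge>t0. norm (y t, v t) < \<epsilon>)) \<and>
     (\<forall>t0. \<exists>\<delta>>0. \<forall>y v. lin2_solution a q t0 y v \<and> norm (y t0, v t0) < \<delta>
          \<longrightarrow> ((\<lambda>t. (y t, v t)) \<longlongrightarrow> 0) at_top)"

end

theory Submission
  imports Defs "HOL-Real_Asymp.Real_Asymp"
begin

lemma antideriv_exists:
  fixes f :: "real \<Rightarrow> real"
  assumes "continuous_on UNIV f"
  shows "\<exists>F. \<forall>x. (F has_real_derivative f x) (at x)"
proof -
  have "\<exists>F. \<forall>x::real. -\<infinity> < ereal x \<longrightarrow> ereal x < \<infinity> \<longrightarrow> (F has_vector_derivative f x) (at x)"
    by (rule einterval_antiderivative) (use assms in \<open>auto simp: continuous_on_eq_continuous_at\<close>)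
  then show ?thesis by (auto simp: has_real_derivative_iff_has_vector_derivative)
qed

lemma ftc_real:
  fixes F f :: "real \<Rightarrow> real"
  assumes "a \<le> b" "\<forall>x. (F has_real_derivative f x) (at x)"
  shows "(f has_integral (F b - F a)) {a..b}"
  apply (rule fundamental_theorem_of_calculus[OF assms(1)])
  using assms(2) by (auto simp: has_real_derivative_iff_has_vector_derivative[symmetric] intro: has_field_derivative_at_within)

lemma periodic_nat:
  fixes f :: "real \<Rightarrow> real"
  assumes "\<forall>t. f (t + T) = f t"
  shows "f (x + real n * T) = f x"
proof (induction n)
  case 0 then show ?case by simp
next
  case (Suc n)
  have "f (x + real (Suc n) * T) = f ((x + real n * T) + T)" by (simp add: algebra_simps)
  also have "\<dots> = f x" using assms Suc by simp
  finally show ?case .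
qed

lemma periodic_int:
  fixes f :: "real \<Rightarrow> real"
  assumes "\<forall>t. f (t + T) = f t"
  shows "f (x + of_int n * T) = f x"
proof (cases "n \<ge> 0")
  case True
  then obtain m where m: "n = int m" using nonneg_int_cases by blast
  have "f (x + real m * T) = f x" by (rule periodic_nat[OF assms])
  then show ?thesis unfolding m by simp
next
  case False
  then obtain m where m: "n = - int m" using nonpos_int_cases[of n] by (metis linorder_not_le less_imp_le)
  have "f ((x - real m * T) + real m * T) = f (x - real m * T)" by (rule periodic_nat[OF assms])
  then show ?thesis unfolding m by simp
qed

lemma periodic_bounded:
  fixes f :: "real \<Rightarrow> real"
  assumes "T > 0" "continuous_on UNIV f" "\<forall>t. f (t + T) = f t"
  shows "\<exists>M. \<forall>t. \<bar>f t\<bar> \<le> M"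
proof -
  have "compact (f ` {0..T})"
    by (rule compact_continuous_image) (use assms(2) continuous_on_subset in auto)
  then have "bounded (f ` {0..T})" by (rule compact_imp_bounded)
  then obtain M where M: "\<And>x. x \<in> f ` {0..T} \<Longrightarrow> norm x \<le> M" by (auto simp: bounded_iff)
  have "\<bar>f t\<bar> \<le> M" for t
  proof -
    define n where "n = \<lfloor>t / T\<rfloor>"
    have a: "of_int n \<le> t / T" unfolding n_def by (rule of_int_floor_le)
    have b: "t / T < of_int n + 1" unfolding n_def by linarith
    have "of_int n * T \<le> t" using a assms(1) by (simp add: pos_le_divide_eq)
    moreover have "t < (of_int n + 1) * T" using b assms(1) by (simp add: pos_divide_less_eq)
    ultimately have "t - of_int n * T \<in> {0..T}" by (auto simp: algebra_simps)
    then have "norm (f (t - of_int n * T)) \<le> M" using M by blast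
    moreover have "f (t - of_int n * T + of_int n * T) = f (t - of_int n * T)"
      by (rule periodic_int[OF assms(3)])
    ultimately show ?thesis by simp
  qed
  then show ?thesis by blast
qed

lemma periodic_antideriv:
  fixes f :: "real \<Rightarrow> real"
  assumes "T > 0" "continuous_on UNIV f" "\<forall>t. f (t + T) = f t" "integral {0..T} f = 0"
  shows "\<exists>F. (\<forall>x. (F has_real_derivative f x) (at x)) \<and> (\<forall>t. F (t + T) = F t) \<and> F 0 = 0"
proof -
  obtain F0 where F0: "\<forall>x. (F0 has_real_derivative f x) (at x)" using antideriv_exists[OF assms(2)] by blast
  define F where "F = (\<lambda>t. F0 t - F0 0)"
  have F: "\<forall>x. (F has_real_derivative f x) (at x)"
    unfolding F_def using F0 DERIV_diff[OF _ DERIV_const, of F0] by fastforce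
  have "(f has_integral (F T - F 0)) {0..T}" using ftc_real[of 0 T F f] F assms(1) by simp
  then have FT: "F T - F 0 = 0" using assms(4) integral_unique by metis
  have "\<forall>x. ((\<lambda>t. F (t + T) - F t) has_real_derivative 0) (at x)"
  proof
    fix x
    have "((\<lambda>t. F (t + T)) has_real_derivative f (x + T)) (at x)"
      using F DERIV_shift[of F "f (x + T)" x T] by blast
    then have "((\<lambda>t. F (t + T) - F t) has_real_derivative f (x + T) - f x) (at x)"
      using F DERIV_diff by blast
    then show "((\<lambda>t. F (t + T) - F t) has_real_derivative 0) (at x)" using assms(3) by simp
  qed
  then have "\<forall>t. F (t + T) - F t = F (0 + T) - F 0" using DERIV_isconst_all by blast
  then have "\<forall>t. F (t + T) = F t" using FT by simp
  moreover have "F 0 = 0" unfolding F_def by simp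
  ultimately show ?thesis using F by blast
qed

lemma decay:
  fixes W W' :: "real \<Rightarrow> real"
  assumes d: "\<forall>t\<ge>t0. (W has_real_derivative W' t) (at t within {t0..})"
    and le: "\<forall>t\<ge>t0. W' t \<le> - \<gamma> * W t" and "t \<ge> t0"
  shows "W t \<le> W t0 * exp (- \<gamma> * (t - t0))"
proof -
  define h where "h = (\<lambda>x. W x * exp (\<gamma> * (x - t0)))"
  have cW: "continuous_on {t0..} W"
    unfolding continuous_on_eq_continuous_within
  proof
    fix x assume "x \<in> {t0..}"
    then have "(W has_real_derivative W' x) (at x within {t0..})" using d by auto
    then show "continuous (at x within {t0..}) W" by (rule DERIV_continuous)
  qed
  have ch: "continuous_on {t0..t} h"
    unfolding h_def using continuous_on_subset[OF cW, of "{t0..t}"]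
    by (auto intro!: continuous_intros)
  have "h t \<le> h t0"
  proof (rule DERIV_nonpos_imp_decreasing_open[OF \<open>t \<ge> t0\<close> _ ch])
    fix x assume x: "t0 < x" "x < t"
    have "(W has_real_derivative W' x) (at x within {t0..})" using d x by auto
    then have "(W has_real_derivative W' x) (at x within {t0<..})"
      by (rule DERIV_subset) auto
    then have dx: "(W has_real_derivative W' x) (at x)"
      using x at_within_open[of x "{t0<..}"] by simp
    have "(h has_real_derivative W' x * exp (\<gamma> * (x - t0)) + W x * (exp (\<gamma> * (x - t0)) * (\<gamma> * 1))) (at x)"
      unfolding h_def using dx by (auto intro!: derivative_eq_intros)
    moreover have "W' x * exp (\<gamma> * (x - t0)) + W x * (exp (\<gamma> * (x - t0)) * (\<gamma> * 1)) \<le> 0"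
    proof -
      have "W' x \<le> - \<gamma> * W x" using le x by auto
      then have "W' x + \<gamma> * W x \<le> 0" by linarith
      then have "(W' x + \<gamma> * W x) * exp (\<gamma> * (x - t0)) \<le> 0"
        by (simp add: mult_nonpos_nonneg)
      then show ?thesis by (simp add: algebra_simps)
    qed
    ultimately show "\<exists>y. (h has_real_derivative y) (at x) \<and> y \<le> 0" by blast
  qed
  then have H: "W t * exp (\<gamma> * (t - t0)) \<le> W t0" unfolding h_def by simp
  have e: "exp (\<gamma> * (t - t0)) * exp (- \<gamma> * (t - t0)) = 1"
    by (simp add: exp_add[symmetric])
  have "W t = W t * exp (\<gamma> * (t - t0)) * exp (- \<gamma> * (t - t0))"
    using e by (simp add: mult.assoc)
  also have "\<dots> \<le> W t0 * exp (- \<gamma> * (t - t0))"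
    using H by (rule mult_right_mono) simp
  finally show ?thesis .
qed

lemma psd2:
  fixes a b d y u :: real
  assumes "a \<ge> 0" "d \<ge> 0" "b^2 \<le> 4*a*d"
  shows "a*y^2 + b*y*u + d*u^2 \<ge> 0"
proof (cases "a = 0")
  case True
  then have "b = 0" using assms(3) by simp
  then show ?thesis using True assms(2) by simp
next
  case False
  then have a: "a > 0" using assms(1) by simp
  have "4*a*(a*y^2 + b*y*u + d*u^2) = (2*a*y + b*u)^2 + (4*a*d - b^2)*u^2"
    by (simp add: algebra_simps power2_eq_square)
  also have "\<dots> \<ge> 0" using assms(3) by (intro add_nonneg_nonneg) auto
  finally show ?thesis using a by (simp add: zero_le_mult_iff)
qed

lemma quad_pos:
  fixes a b d :: real
  assumes "a > 0" "d > 0" "b^2 < 4*a*d"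
  shows "\<exists>\<epsilon>>0. \<forall>y u. a*y^2 + b*y*u + d*u^2 \<ge> \<epsilon>*(y^2+u^2)"
proof -
  define \<epsilon> where "\<epsilon> = (4*a*d - b^2) / (4*(a+d))"
  have e0: "\<epsilon> > 0" unfolding \<epsilon>_def using assms by simp
  have "\<epsilon> \<le> (4*a*d) / (4*(a+d))" unfolding \<epsilon>_def using assms
    by (intro divide_right_mono) auto
  also have "\<dots> = a * (d / (a+d))" using assms by (simp add: field_simps)
  also have "\<dots> \<le> a * 1" using assms by (intro mult_left_mono) auto
  finally have ea: "\<epsilon> \<le> a" by simp
  have "\<epsilon> \<le> (4*a*d) / (4*(a+d))" unfolding \<epsilon>_def using assms
    by (intro divide_right_mono) auto
  also have "\<dots> = d * (a / (a+d))" using assms by (simp add: field_simps)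
  also have "\<dots> \<le> d * 1" using assms by (intro mult_left_mono) auto
  finally have ed: "\<epsilon> \<le> d" by simp
  have E: "\<epsilon> * (a+d) = (4*a*d - b^2)/4" unfolding \<epsilon>_def using assms by (simp add: field_simps)
  have "4*(a-\<epsilon>)*(d-\<epsilon>) = 4*a*d - 4*(\<epsilon>*(a+d)) + 4*\<epsilon>^2"
    by (simp add: algebra_simps power2_eq_square)
  moreover have "4*(\<epsilon>*(a+d)) = 4*a*d - b^2" using E by simp
  ultimately have "b^2 \<le> 4*(a-\<epsilon>)*(d-\<epsilon>)"
    using zero_le_power2[of \<epsilon>] by linarith
  then have "\<forall>y u. (a-\<epsilon>)*y^2 + b*y*u + (d-\<epsilon>)*u^2 \<ge> 0"
    using ea ed by (intro allI psd2) auto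
  then have "\<forall>y u. a*y^2 + b*y*u + d*u^2 \<ge> \<epsilon>*(y^2+u^2)"
    by (auto simp: algebra_simps)
  then show ?thesis using e0 by blast
qed

lemma yu_le: fixes y u :: real shows "\<bar>y*u\<bar> \<le> (y^2+u^2)/2"
proof -
  have "0 \<le> (\<bar>y\<bar> - \<bar>u\<bar>)^2" by simp
  then show ?thesis by (simp add: power2_eq_square algebra_simps abs_mult)
qed

lemma quad_upper:
  fixes a b d y u :: real
  shows "a*y^2 + b*y*u + d*u^2 \<le> (\<bar>a\<bar> + \<bar>b\<bar> + \<bar>d\<bar>)*(y^2+u^2)"
proof -
  have "a*y^2 \<le> \<bar>a\<bar>*y^2" by (intro mult_right_mono) auto
  also have "\<dots> \<le> \<bar>a\<bar>*(y^2+u^2)" by (intro mult_left_mono) auto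
  finally have 1: "a*y^2 \<le> \<bar>a\<bar>*(y^2+u^2)" .
  have "d*u^2 \<le> \<bar>d\<bar>*u^2" by (intro mult_right_mono) auto
  also have "\<dots> \<le> \<bar>d\<bar>*(y^2+u^2)" by (intro mult_left_mono) auto
  finally have "d*u^2 \<le> \<bar>d\<bar>*(y^2+u^2)" .
  note 1 this
  moreover have "b*(y*u) \<le> \<bar>b\<bar>*(y^2+u^2)"
  proof -
    have "b*(y*u) \<le> \<bar>b\<bar>*\<bar>y*u\<bar>" by (metis abs_ge_self abs_mult)
    also have "\<dots> \<le> \<bar>b\<bar>*(y^2+u^2)" using yu_le[of y u]
      by (intro mult_left_mono) auto
    finally show ?thesis .
  qed
  ultimately show ?thesis by (simp add: algebra_simps)
qed

lemma q_bound:
  fixes a b d y u M :: real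
  assumes "\<bar>a\<bar> \<le> M" "\<bar>b\<bar> \<le> M" "\<bar>d\<bar> \<le> M"
  shows "\<bar>a*y^2 + 2*b*y*u + d*u^2\<bar> \<le> 2*M*(y^2+u^2)"
proof -
  have "\<bar>a*y^2\<bar> \<le> M*y^2" using assms(1) by (simp add: abs_mult mult_right_mono)
  moreover have "\<bar>d*u^2\<bar> \<le> M*u^2" using assms(3) by (simp add: abs_mult mult_right_mono)
  moreover have "\<bar>2*b*y*u\<bar> \<le> M*(y^2+u^2)"
  proof -
    have "\<bar>2*b*y*u\<bar> = \<bar>b\<bar> * (2*\<bar>y*u\<bar>)" by (simp add: abs_mult)
    also have "\<dots> \<le> M * (y^2+u^2)" using yu_le[of y u] assms(2)
      by (intro mult_mono) auto
    finally show ?thesis .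
  qed
  ultimately show ?thesis
    using abs_triangle_ineq[of "a*y^2 + 2*b*y*u" "d*u^2"] abs_triangle_ineq[of "a*y^2" "2*b*y*u"]
    by (simp add: algebra_simps)
qed

lemma lin_bound:
  fixes a1 a2 y u M :: real
  assumes "\<bar>a1\<bar> \<le> M" "\<bar>a2\<bar> \<le> M"
  shows "\<bar>a1*y + a2*u\<bar> \<le> M*(\<bar>y\<bar>+\<bar>u\<bar>)"
proof -
  have "\<bar>a1*y\<bar> \<le> M*\<bar>y\<bar>" using assms(1) by (simp add: abs_mult mult_right_mono)
  moreover have "\<bar>a2*u\<bar> \<le> M*\<bar>u\<bar>" using assms(2) by (simp add: abs_mult mult_right_mono)
  moreover have "M*(\<bar>y\<bar>+\<bar>u\<bar>) = M*\<bar>y\<bar> + M*\<bar>u\<bar>" by (simp add: distrib_left)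
  ultimately show ?thesis using abs_triangle_ineq[of "a1*y" "a2*u"] by linarith
qed

lemma prod_bound:
  fixes a1 a2 b1 b2 y u M :: real
  assumes "\<bar>a1\<bar> \<le> M" "\<bar>a2\<bar> \<le> M" "\<bar>b1\<bar> \<le> M" "\<bar>b2\<bar> \<le> M"
  shows "\<bar>(a1*y + a2*u)*(b1*y + b2*u)\<bar> \<le> 2*M^2*(y^2+u^2)"
proof -
  have M: "M \<ge> 0" using assms(1) by simp
  have "\<bar>(a1*y + a2*u)*(b1*y + b2*u)\<bar> \<le> (M*(\<bar>y\<bar>+\<bar>u\<bar>))*(M*(\<bar>y\<bar>+\<bar>u\<bar>))"
    unfolding abs_mult using lin_bound[OF assms(1,2)] lin_bound[OF assms(3,4)] M
    by (intro mult_mono) auto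
  also have "\<dots> = M^2 * (\<bar>y\<bar>+\<bar>u\<bar>)^2" by (simp add: power2_eq_square algebra_simps)
  also have "\<dots> \<le> M^2 * (2*(y^2+u^2))"
  proof (rule mult_left_mono)
    have "(\<bar>y\<bar>+\<bar>u\<bar>)^2 = y^2 + u^2 + 2*\<bar>y*u\<bar>" by (simp add: power2_eq_square algebra_simps abs_mult)
    then show "(\<bar>y\<bar>+\<bar>u\<bar>)^2 \<le> 2*(y^2+u^2)" using yu_le[of y u] by simp
  qed simp
  finally show ?thesis by (simp add: algebra_simps)
qed

lemma expstab_imp:
  assumes K: "K > 0" and g: "\<gamma> > 0"
    and H: "\<forall>t0 y v. lin2_solution a q t0 y v \<longrightarrow>
       (\<forall>t\<ge>t0. (y t)^2 + (v t)^2 \<le> K * ((y t0)^2 + (v t0)^2) * exp (- \<gamma> * (t - t0)))"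
  shows "zero_asympt_stable a q"
  unfolding zero_asympt_stable_def
proof (intro conjI allI impI)
  fix t0 :: real and \<epsilon> :: real assume e: "\<epsilon> > 0"
  define \<delta> where "\<delta> = \<epsilon> / sqrt (K+1)"
  have d0: "\<delta> > 0" unfolding \<delta>_def using e K by simp
  have dsq: "\<delta>^2 = \<epsilon>^2 / (K+1)" unfolding \<delta>_def using K by (simp add: power_divide)
  show "\<exists>\<delta>>0. \<forall>y v. lin2_solution a q t0 y v \<and> norm (y t0, v t0) < \<delta> \<longrightarrow> (\<forall>t\<ge>t0. norm (y t, v t) < \<epsilon>)"
  proof (intro exI[of _ \<delta>] conjI allI impI d0)
    fix y v t assume A: "lin2_solution a q t0 y v \<and> norm (y t0, v t0) < \<delta>" and t: "t0 \<le> t"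
    have "sqrt ((y t0)^2 + (v t0)^2) < \<delta>" using A by (simp add: norm_Pair)
    then have N0: "(y t0)^2 + (v t0)^2 < \<delta>^2"
    proof -
      have "(sqrt ((y t0)^2 + (v t0)^2))^2 < \<delta>^2"
        using \<open>sqrt ((y t0)^2 + (v t0)^2) < \<delta>\<close> by (intro power_strict_mono) auto
      then show ?thesis by simp
    qed
    have ex: "exp (- \<gamma> * (t - t0)) \<le> 1" using g t by simp
    have "(y t)^2 + (v t)^2 \<le> K * ((y t0)^2 + (v t0)^2) * exp (- \<gamma> * (t - t0))"
      using H A t by blast
    also have "\<dots> \<le> K * ((y t0)^2 + (v t0)^2)"
      using ex K by (intro mult_left_le) auto
    also have "\<dots> \<le> K * \<delta>^2" using N0 K by simp
    also have "\<dots> = \<epsilon>^2 * (K / (K+1))" using dsq by simp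
    also have "\<dots> < \<epsilon>^2 * 1" using K e by (intro mult_strict_left_mono) auto
    finally have "(y t)^2 + (v t)^2 < \<epsilon>^2" by simp
    then have "sqrt ((y t)^2 + (v t)^2) < sqrt (\<epsilon>^2)" by (rule real_sqrt_less_mono)
    then show "norm (y t, v t) < \<epsilon>" using e by (simp add: norm_Pair)
  qed
next
  fix t0 :: real
  show "\<exists>\<delta>>0. \<forall>y v. lin2_solution a q t0 y v \<and> norm (y t0, v t0) < \<delta> \<longrightarrow> ((\<lambda>t. (y t, v t)) \<longlongrightarrow> 0) at_top"
  proof (intro exI[of _ 1] conjI allI impI)
    fix y v assume A: "lin2_solution a q t0 y v \<and> norm (y t0, v t0) < 1"
    define C where "C = K * ((y t0)^2 + (v t0)^2)"
    have ev: "eventually (\<lambda>t. norm (y t, v t) \<le> sqrt (C * exp (- \<gamma> * (t - t0)))) at_top"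
      using eventually_ge_at_top[of t0]
    proof eventually_elim
      case (elim t)
      then have "(y t)^2 + (v t)^2 \<le> C * exp (- \<gamma> * (t - t0))" unfolding C_def using H A by blast
      then show ?case by (simp add: norm_Pair)
    qed
    have "((\<lambda>t. exp (- \<gamma> * (t - t0))) \<longlongrightarrow> 0) at_top" using g by real_asymp
    then have "((\<lambda>t. sqrt (C * exp (- \<gamma> * (t - t0)))) \<longlongrightarrow> sqrt (C * 0)) at_top"
      by (intro tendsto_intros)
    then have lim: "((\<lambda>t. sqrt (C * exp (- \<gamma> * (t - t0)))) \<longlongrightarrow> 0) at_top" by simp
    show "((\<lambda>t. (y t, v t)) \<longlongrightarrow> 0) at_top"
      by (rule Lim_null_comparison[OF ev lim])
  qed simp
qed

lemma Vbounds:
  fixes p N A Pb q M \<mu> :: real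
  assumes "p*N \<le> A" "A \<le> Pb*N" "\<bar>q\<bar> \<le> 2*M*N" "\<mu> \<ge> 0" "\<mu>*(2*M) \<le> p/2" "N \<ge> 0"
  shows "(p/2)*N \<le> A + \<mu>*q" "A + \<mu>*q \<le> (Pb + p/2)*N"
proof -
  have "\<bar>\<mu>*q\<bar> = \<mu>*\<bar>q\<bar>" using assms(4) by (simp add: abs_mult)
  also have "\<dots> \<le> \<mu>*(2*M*N)" using assms(3,4) by (rule mult_left_mono)
  also have "\<dots> = (\<mu>*(2*M))*N" by simp
  also have "\<dots> \<le> (p/2)*N" using assms(5,6) by (rule mult_right_mono)
  finally have *: "\<bar>\<mu>*q\<bar> \<le> (p/2)*N" .
  show "(p/2)*N \<le> A + \<mu>*q" using * assms(1) by (simp add: algebra_simps abs_le_iff)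
  show "A + \<mu>*q \<le> (Pb + p/2)*N" using * assms(2) by (simp add: algebra_simps abs_le_iff)
qed

lemma Dbound:
  fixes \<epsilon> N L R M \<mu> :: real
  assumes "\<epsilon>*N \<le> L" "\<bar>R\<bar> \<le> 8*M^2*N" "\<mu> \<ge> 0" "\<mu>*(8*M^2) \<le> \<epsilon>/2" "N \<ge> 0"
  shows "-\<mu>*L + \<mu>^2*R \<le> -(\<mu>*(\<epsilon>/2))*N"
proof -
  have "\<mu>*R \<le> \<mu>*\<bar>R\<bar>" using assms(3) by (simp add: mult_left_mono)
  also have "\<dots> \<le> \<mu>*(8*M^2*N)" using assms(2,3) by (rule mult_left_mono)
  also have "\<dots> = (\<mu>*(8*M^2))*N" by simp
  also have "\<dots> \<le> (\<epsilon>/2)*N" using assms(4,5) by (rule mult_right_mono)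
  finally have "\<mu>*(\<mu>*R) \<le> \<mu>*((\<epsilon>/2)*N)" using assms(3) by (rule mult_left_mono)
  moreover have "\<mu>*(\<epsilon>*N) \<le> \<mu>*L" using assms(1,3) by (rule mult_left_mono)
  ultimately show ?thesis by (simp add: power2_eq_square algebra_simps)
qed

lemma Nge:
  fixes c0 V Pb' N :: real
  assumes "c0 \<ge> 0" "V \<le> Pb'*N" "Pb' > 0"
  shows "-c0*N \<le> -(c0/Pb')*V"
proof -
  have "(c0/Pb')*V \<le> (c0/Pb')*(Pb'*N)" using assms by (intro mult_left_mono) auto
  also have "\<dots> = c0*N" using assms(3) by simp
  finally show ?thesis by simp
qed

lemma sq_sum_le: fixes a b :: real shows "(a+b)^2 \<le> 2*a^2 + 2*b^2"
proof -
  have "0 \<le> (a-b)^2" by simp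
  then show ?thesis by (simp add: power2_eq_square algebra_simps)
qed

lemma sq_le_B: fixes P B x :: real assumes "\<bar>P\<bar> \<le> B" shows "(P*x)^2 \<le> B^2*x^2"
proof -
  have "P^2 \<le> B^2" using assms by (metis abs_le_square_iff abs_of_nonneg abs_ge_zero order_trans power2_abs)
  then show ?thesis by (simp add: power_mult_distrib mult_right_mono)
qed

lemma conv1:
  fixes v u y P B \<mu> :: real
  assumes "v = \<mu>*(u - P*y)" "\<bar>P\<bar> \<le> B"
  shows "y^2 + v^2 \<le> (1 + 2*\<mu>^2 + 2*\<mu>^2*B^2)*(y^2 + u^2)"
proof -
  have "v^2 = \<mu>^2*(u + (-P*y))^2" using assms(1) by (simp add: power_mult_distrib)
  also have "\<dots> \<le> \<mu>^2*(2*u^2 + 2*(-P*y)^2)" by (intro mult_left_mono sq_sum_le) auto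
  also have "\<dots> \<le> \<mu>^2*(2*u^2 + 2*(B^2*y^2))" using sq_le_B[OF assms(2), of y]
    by (intro mult_left_mono) auto
  finally have "v^2 \<le> 2*\<mu>^2*u^2 + 2*\<mu>^2*B^2*y^2" by (simp add: algebra_simps)
  moreover have "(1 + 2*\<mu>^2 + 2*\<mu>^2*B^2)*(y^2 + u^2) = y^2 + v^2 + (u^2 + 2*(\<mu>^2*y^2) + 2*(\<mu>^2*B^2*u^2)) + (2*\<mu>^2*u^2 + 2*\<mu>^2*B^2*y^2 - v^2)"
    by (simp add: algebra_simps)
  moreover have "0 \<le> u^2 + 2*(\<mu>^2*y^2) + 2*(\<mu>^2*B^2*u^2)" by (intro add_nonneg_nonneg) auto
  ultimately show ?thesis by linarith
qed

lemma conv2: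
  fixes v u y P B \<mu> :: real
  assumes "u = v/\<mu> + P*y" "\<bar>P\<bar> \<le> B" "\<mu> > 0"
  shows "y^2 + u^2 \<le> (1 + 2*B^2 + 2/\<mu>^2)*(y^2 + v^2)"
proof -
  have "u^2 \<le> 2*(v/\<mu>)^2 + 2*(P*y)^2" using assms(1) sq_sum_le by simp
  also have "\<dots> \<le> 2*(v^2/\<mu>^2) + 2*(B^2*y^2)" using sq_le_B[OF assms(2), of y]
    by (simp add: power_divide)
  finally have "u^2 \<le> 2*(v^2/\<mu>^2) + 2*B^2*y^2" by simp
  moreover have "(1 + 2*B^2 + 2/\<mu>^2)*(y^2 + v^2) = y^2 + u^2 + (v^2 + 2*(B^2* v^2) + 2*((y/\<mu>)^2)) + (2*(v^2/\<mu>^2) + 2*B^2*y^2 - u^2)"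
    by (simp add: algebra_simps power_divide)
  moreover have "0 \<le> v^2 + 2*(B^2* v^2) + 2*((y/\<mu>)^2)" by (intro add_nonneg_nonneg) auto
  ultimately show ?thesis by linarith
qed

lemma quad_deriv:
  fixes y u a b d :: "real \<Rightarrow> real"
  assumes "(y has_real_derivative Yd) (at x within S)" "(u has_real_derivative Ud) (at x within S)"
    "(a has_real_derivative ad) (at x within S)" "(b has_real_derivative bd) (at x within S)"
    "(d has_real_derivative dd) (at x within S)"
  shows "((\<lambda>x. a x*(y x*y x) + 2*(b x*(y x*u x)) + d x*(u x*u x)) has_real_derivative
     (ad*(y x*y x) + a x*(2*y x*Yd) + 2*(bd*(y x*u x) + b x*(Yd*u x + y x*Ud)) + dd*(u x*u x) + d x*(2*u x*Ud)))
     (at x within S)"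
  apply (rule DERIV_cong)
   apply (rule DERIV_add[OF DERIV_add[OF DERIV_mult[OF assms(3) DERIV_mult[OF assms(1) assms(1)]]
              DERIV_cmult[OF DERIV_mult[OF assms(4) DERIV_mult[OF assms(1) assms(2)]]]]
              DERIV_mult[OF assms(5) DERIV_mult[OF assms(2) assms(2)]]])
  by (simp add: algebra_simps)

lemma alg_id:
  fixes \<alpha> \<beta> \<mu> k c s P g1 g2 y u :: real
  assumes "k = \<beta> + s"
  shows "let Yd = \<mu>*(u - P*y); Ud = \<mu>*((P-\<alpha>)*u + (\<alpha>*P - \<beta> - P^2)*y);
             q11 = (2*k - c*\<alpha>)*g1 + c*g2; q12 = g2 - \<alpha>*g1; q22 = -2*g1 in
     (0*(y*y) + k*(2*y*Yd) + 2*(0*(y*u) + (c/2)*(Yd*u + y*Ud)) + 0*(u*u) + 1*(2*u*Ud))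
     + \<mu>*(((2*k - c*\<alpha>)*P + c*(P^2 - s))*(y*y) + q11*(2*y*Yd) + 2*(((P^2 - s) - \<alpha>*P)*(y*u) + q12*(Yd*u + y*Ud)) + ((-2)*P)*(u*u) + q22*(2*u*Ud))
     = -\<mu>*(c*k*y^2 + c*\<alpha>*y*u + (2*\<alpha>-c)*u^2) + \<mu>^2*(2*((-P)*y + 1*u)*(q11*y + q12*u)
        + 2*((\<alpha>*P - \<beta> - P^2)*y + (P - \<alpha>)*u)*(q12*y + q22*u))"
  using assms by (simp add: Let_def algebra_simps power2_eq_square)


lemma alg_id2:
  fixes \<alpha> \<beta> \<mu> k c s P g1 g2 y u q11 q12 q22 :: real
  assumes "k = \<beta> + s" "q11 = (2*k - c*\<alpha>)*g1 + c*g2" "q12 = g2 - \<alpha>*g1" "q22 = -2*g1"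
  shows "(0*(y*y) + k*(2*y*(\<mu>*(u - P*y))) + 2*(0*(y*u) + c/2*((\<mu>*(u - P*y))*u + y*(\<mu>*((P-\<alpha>)*u + (\<alpha>*P - \<beta> - P^2)*y))))
       + 0*(u*u) + 1*(2*u*(\<mu>*((P-\<alpha>)*u + (\<alpha>*P - \<beta> - P^2)*y))))
     + \<mu>*(((2*k - c*\<alpha>)*P + c*(P^2 - s))*(y*y) + q11*(2*y*(\<mu>*(u - P*y)))
       + 2*(((P^2 - s) - \<alpha>*P)*(y*u) + q12*((\<mu>*(u - P*y))*u + y*(\<mu>*((P-\<alpha>)*u + (\<alpha>*P - \<beta> - P^2)*y))))
       + ((-2)*P)*(u*u) + q22*(2*u*(\<mu>*((P-\<alpha>)*u + (\<alpha>*P - \<beta> - P^2)*y))))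
     = -\<mu>*(c*k*y^2 + c*\<alpha>*y*u + (2*\<alpha>-c)*u^2) + \<mu>^2*(2*((-P)*y + 1*u)*(q11*y + q12*u)
        + 2*((\<alpha>*P - \<beta> - P^2)*y + (P - \<alpha>)*u)*(q12*y + q22*u))"
  using assms by (simp add: algebra_simps power2_eq_square)

lemma core:
  fixes \<alpha> \<beta> \<mu> k c s M \<epsilon> p Pb B :: real and \<phi> \<Psi> G1 G2 :: "real \<Rightarrow> real"
  assumes dP: "\<forall>x. (\<Psi> has_real_derivative \<phi> x) (at x)"
    and dG1: "\<forall>x. (G1 has_real_derivative \<Psi> x) (at x)"
    and dG2: "\<forall>x. (G2 has_real_derivative (\<Psi> x)^2 - s) (at x)"
    and kdef: "k = \<beta> + s" and mu: "\<mu> > 0"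
    and bP: "\<forall>t. \<bar>\<Psi> t\<bar> \<le> B"
    and bQ: "\<forall>t. \<bar>(2*k - c*\<alpha>)*G1 t + c*G2 t\<bar> \<le> M \<and> \<bar>G2 t - \<alpha>*G1 t\<bar> \<le> M \<and> \<bar>-2*G1 t\<bar> \<le> M"
    and bB: "\<forall>t. \<bar>-\<Psi> t\<bar> \<le> M \<and> \<bar>\<alpha>*\<Psi> t - \<beta> - (\<Psi> t)^2\<bar> \<le> M \<and> \<bar>\<Psi> t - \<alpha>\<bar> \<le> M \<and> \<bar>1::real\<bar> \<le> M"
    and e: "\<epsilon> > 0" "\<forall>y u. c*k*y^2 + c*\<alpha>*y*u + (2*\<alpha>-c)*u^2 \<ge> \<epsilon>*(y^2+u^2)"
    and p: "p > 0" "\<forall>y u. k*y^2 + c*y*u + 1*u^2 \<ge> p*(y^2+u^2)"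
           "\<forall>y u. k*y^2 + c*y*u + 1*u^2 \<le> Pb*(y^2+u^2)"
    and small: "\<mu>*(8*M^2) \<le> \<epsilon>/2" "\<mu>*(2*M) \<le> p/2"
  shows "\<exists>K>0. \<exists>\<gamma>>0. \<forall>t0 y v. lin2_solution (\<alpha>*\<mu>) (\<lambda>t. \<beta>*\<mu>^2 + \<mu>*\<phi> t) t0 y v \<longrightarrow>
           (\<forall>t\<ge>t0. (y t)^2 + (v t)^2 \<le> K * ((y t0)^2 + (v t0)^2) * exp (- \<gamma> * (t - t0)))"
proof -
  have "p*(1^2+0^2) \<le> Pb*(1^2+0^2)" using p(2,3) order_trans by (metis (no_types))
  then have pPb: "p \<le> Pb" by simp
  define Pb' where "Pb' = Pb + p/2"
  have Pb'0: "Pb' > 0" unfolding Pb'_def using pPb p(1) by simp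
  define K1 where "K1 = 1 + 2*B^2 + 2/\<mu>^2"
  define K2 where "K2 = 1 + 2*\<mu>^2 + 2*\<mu>^2*B^2"
  define \<gamma> where "\<gamma> = \<mu>*(\<epsilon>/2)/Pb'"
  define K where "K = K2 * (Pb'/(p/2)) * K1"
  have K1: "K1 > 0" unfolding K1_def by (simp add: add_pos_nonneg)
  have K2: "K2 > 0" unfolding K2_def by (simp add: add_pos_nonneg)
  have g0: "\<gamma> > 0" unfolding \<gamma>_def using mu e(1) Pb'0 by simp
  have K0: "K > 0" unfolding K_def using K1 K2 Pb'0 p(1) by simp
  define Q11 where "Q11 = (\<lambda>t. (2*k - c*\<alpha>)*G1 t + c*G2 t)"
  define Q12 where "Q12 = (\<lambda>t. G2 t - \<alpha>*G1 t)"
  define Q22 where "Q22 = (\<lambda>t. -2*G1 t)"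
  have main: "(y t)^2 + (v t)^2 \<le> K * ((y t0)^2 + (v t0)^2) * exp (- \<gamma> * (t - t0))"
    if sol: "lin2_solution (\<alpha>*\<mu>) (\<lambda>t. \<beta>*\<mu>^2 + \<mu>*\<phi> t) t0 y v" and t: "t \<ge> t0" for t0 y v t
  proof -
    define u where "u = (\<lambda>t. v t / \<mu> + \<Psi> t * y t)"
    have vu: "v x = \<mu> * (u x - \<Psi> x * y x)" for x unfolding u_def using mu by (simp add: field_simps)
    have dy: "(y has_real_derivative \<mu> * (u x - \<Psi> x * y x)) (at x within {t0..})" if "x \<ge> t0" for x
      using sol that unfolding lin2_solution_def vu by auto
    have du: "(u has_real_derivative \<mu> * ((\<Psi> x - \<alpha>) * u x + (\<alpha> * \<Psi> x - \<beta> - (\<Psi> x)^2) * y x)) (at x within {t0..})"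
      if x: "x \<ge> t0" for x
    proof -
      have dv: "(v has_real_derivative (- (\<alpha>*\<mu>) * v x - (\<beta>*\<mu>^2 + \<mu>*\<phi> x) * y x)) (at x within {t0..})"
        using sol x unfolding lin2_solution_def by auto
      have dy': "(y has_real_derivative v x) (at x within {t0..})"
        using sol x unfolding lin2_solution_def by auto
      have dPx: "(\<Psi> has_real_derivative \<phi> x) (at x within {t0..})"
        using dP has_field_derivative_at_within by blast
      have "(u has_real_derivative (- (\<alpha>*\<mu>) * v x - (\<beta>*\<mu>^2 + \<mu>*\<phi> x) * y x) / \<mu> + (\<phi> x * y x + v x * \<Psi> x)) (at x within {t0..})"
        unfolding u_def by (rule DERIV_add[OF DERIV_cdivide[OF dv] DERIV_mult[OF dPx dy']])
      moreover have "(- (\<alpha>*\<mu>) * v x - (\<beta>*\<mu>^2 + \<mu>*\<phi> x) * y x) / \<mu> + (\<phi> x * y x + v x * \<Psi> x)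
          = \<mu> * ((\<Psi> x - \<alpha>) * u x + (\<alpha> * \<Psi> x - \<beta> - (\<Psi> x)^2) * y x)"
        unfolding u_def using mu by (simp add: field_simps power2_eq_square)
      ultimately show ?thesis by simp
    qed
    have dG1w: "(G1 has_real_derivative \<Psi> x) (at x within {t0..})" for x
      using dG1 has_field_derivative_at_within by blast
    have dG2w: "(G2 has_real_derivative (\<Psi> x)^2 - s) (at x within {t0..})" for x
      using dG2 has_field_derivative_at_within by blast
    have dQ11: "(Q11 has_real_derivative (2*k - c*\<alpha>) * \<Psi> x + c * ((\<Psi> x)^2 - s)) (at x within {t0..})" for x
      unfolding Q11_def by (rule DERIV_add[OF DERIV_cmult[OF dG1w] DERIV_cmult[OF dG2w]])
    have dQ12: "(Q12 has_real_derivative ((\<Psi> x)^2 - s) - \<alpha> * \<Psi> x) (at x within {t0..})" for x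
      unfolding Q12_def by (rule DERIV_diff[OF dG2w DERIV_cmult[OF dG1w]])
    have dQ22: "(Q22 has_real_derivative (-2) * \<Psi> x) (at x within {t0..})" for x
      unfolding Q22_def by (rule DERIV_cmult[OF dG1w])
    define V where "V = (\<lambda>x. (k*(y x*y x) + 2*(c/2*(y x*u x)) + 1*(u x*u x))
        + \<mu>*(Q11 x*(y x*y x) + 2*(Q12 x*(y x*u x)) + Q22 x*(u x*u x)))"
    define L where "L = (\<lambda>x. c*k*(y x)^2 + c*\<alpha>*y x*u x + (2*\<alpha>-c)*(u x)^2)"
    define R where "R = (\<lambda>x. 2*((-\<Psi> x)*y x + 1*u x)*(Q11 x*y x + Q12 x*u x)
        + 2*((\<alpha>*\<Psi> x - \<beta> - (\<Psi> x)^2)*y x + (\<Psi> x - \<alpha>)*u x)*(Q12 x*y x + Q22 x*u x))"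
    define N where "N = (\<lambda>x. (y x)^2 + (u x)^2)"
    have dV: "(V has_real_derivative (-\<mu>*L x + \<mu>^2*R x)) (at x within {t0..})" if x: "x \<ge> t0" for x
      unfolding V_def
      apply (rule DERIV_cong[OF DERIV_add[OF quad_deriv[OF dy[OF x] du[OF x] DERIV_const DERIV_const DERIV_const]
               DERIV_cmult[OF quad_deriv[OF dy[OF x] du[OF x] dQ11 dQ12 dQ22]]]])
      unfolding L_def R_def
      by (rule alg_id2[OF kdef]) (simp_all add: Q11_def Q12_def Q22_def)
    have Vform: "V x = (k*(y x)^2 + c*y x*u x + 1*(u x)^2) + \<mu>*(Q11 x*(y x)^2 + 2*Q12 x*y x*u x + Q22 x*(u x)^2)" for x
      by (simp add: V_def power2_eq_square algebra_simps)
    have N0: "N x \<ge> 0" for x unfolding N_def by simp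
    have qb: "\<bar>Q11 x*(y x)^2 + 2*Q12 x*y x*u x + Q22 x*(u x)^2\<bar> \<le> 2*M*N x" for x
      unfolding N_def by (rule q_bound) (use bQ in \<open>auto simp: Q11_def Q12_def Q22_def\<close>)
    have VB: "(p/2)*N x \<le> V x \<and> V x \<le> Pb'*N x" for x
    proof -
      have A1: "p*((y x)^2 + (u x)^2) \<le> k*(y x)^2 + c*y x*u x + 1*(u x)^2"
        using p(2) by blast
      have A2: "k*(y x)^2 + c*y x*u x + 1*(u x)^2 \<le> Pb*((y x)^2 + (u x)^2)"
        using p(3) by blast
      have mu': "\<mu> \<ge> 0" using mu by simp
      have N0': "(y x)^2 + (u x)^2 \<ge> 0" by simp
      note vb = Vbounds[OF A1 A2 qb[of x, unfolded N_def] mu' small(2) N0']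
      show ?thesis unfolding Vform Pb'_def N_def using vb by blast
    qed
    have Rb: "\<bar>R x\<bar> \<le> 8*M^2*N x" for x
    proof -
      have b1: "\<bar>((-\<Psi> x)*y x + 1*u x)*(Q11 x*y x + Q12 x*u x)\<bar> \<le> 2*M^2*N x"
        unfolding N_def by (rule prod_bound) (use bQ bB in \<open>auto simp: Q11_def Q12_def Q22_def\<close>)
      have b2: "\<bar>((\<alpha>*\<Psi> x - \<beta> - (\<Psi> x)^2)*y x + (\<Psi> x - \<alpha>)*u x)*(Q12 x*y x + Q22 x*u x)\<bar> \<le> 2*M^2*N x"
        unfolding N_def by (rule prod_bound) (use bQ bB in \<open>auto simp: Q11_def Q12_def Q22_def\<close>)
      define X1 where "X1 = ((-\<Psi> x)*y x + 1*u x)*(Q11 x*y x + Q12 x*u x)"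
      define X2 where "X2 = ((\<alpha>*\<Psi> x - \<beta> - (\<Psi> x)^2)*y x + (\<Psi> x - \<alpha>)*u x)*(Q12 x*y x + Q22 x*u x)"
      have "R x = 2*X1 + 2*X2" unfolding R_def X1_def X2_def by (simp only: mult.assoc)
      then have "\<bar>R x\<bar> \<le> 2*\<bar>X1\<bar> + 2*\<bar>X2\<bar>" using abs_triangle_ineq[of "2*X1" "2*X2"] by (simp add: abs_mult)
      moreover have "\<bar>X1\<bar> \<le> 2*M^2*N x" "\<bar>X2\<bar> \<le> 2*M^2*N x" using b1 b2 unfolding X1_def X2_def by auto
      ultimately show ?thesis by linarith
    qed
    have Lb: "\<epsilon>*N x \<le> L x" for x unfolding L_def N_def using e(2) by auto
    have DB: "-\<mu>*L x + \<mu>^2*R x \<le> -\<gamma>*V x" for x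
    proof -
      have "-\<mu>*L x + \<mu>^2*R x \<le> -(\<mu>*(\<epsilon>/2))*N x"
        by (rule Dbound[OF Lb Rb]) (use mu small(1) N0 in auto)
      also have "\<dots> \<le> -((\<mu>*(\<epsilon>/2))/Pb')*V x"
        by (rule Nge) (use mu e(1) VB Pb'0 in auto)
      finally show ?thesis unfolding \<gamma>_def by simp
    qed
    have Vt: "V t \<le> V t0 * exp (- \<gamma> * (t - t0))"
      by (rule decay[OF _ _ t]) (use dV DB in auto)
    have "(p/2) * N t \<le> Pb' * N t0 * exp (- \<gamma> * (t - t0))"
    proof -
      have "(p/2) * N t \<le> V t" using VB by blast
      also have "\<dots> \<le> V t0 * exp (- \<gamma> * (t - t0))" by (rule Vt)
      also have "\<dots> \<le> Pb' * N t0 * exp (- \<gamma> * (t - t0))"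
        using VB[of t0] by (intro mult_right_mono) auto
      finally show ?thesis .
    qed
    then have "N t \<le> (Pb' * N t0 * exp (- \<gamma> * (t - t0))) / (p/2)"
      using p(1) by (simp add: pos_le_divide_eq mult_ac)
    moreover have "(Pb' * N t0 * exp (- \<gamma> * (t - t0))) / (p/2) = (Pb'/(p/2)) * N t0 * exp (- \<gamma> * (t - t0))"
      by simp
    ultimately have Nt: "N t \<le> (Pb'/(p/2)) * N t0 * exp (- \<gamma> * (t - t0))"
      by linarith
    have c1: "(y t)^2 + (v t)^2 \<le> K2 * N t"
      unfolding K2_def N_def by (rule conv1[OF vu]) (use bP in auto)
    have c2: "N t0 \<le> K1 * ((y t0)^2 + (v t0)^2)"
      unfolding K1_def N_def by (rule conv2[OF _ _ mu]) (use bP u_def in auto)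
    have E0: "exp (- \<gamma> * (t - t0)) \<ge> 0" by simp
    have Pq: "Pb'/(p/2) \<ge> 0" using Pb'0 p(1) by simp
    have "(y t)^2 + (v t)^2 \<le> K2 * ((Pb'/(p/2)) * N t0 * exp (- \<gamma> * (t - t0)))"
      using order_trans[OF c1 mult_left_mono[OF Nt]] K2 by simp
    also have "\<dots> \<le> K2 * ((Pb'/(p/2)) * (K1 * ((y t0)^2 + (v t0)^2)) * exp (- \<gamma> * (t - t0)))"
      using c2 E0 Pq K2 by (intro mult_left_mono mult_right_mono) auto
    also have "\<dots> = K * ((y t0)^2 + (v t0)^2) * exp (- \<gamma> * (t - t0))"
      unfolding K_def by (simp add: algebra_simps)
    finally show ?thesis .
  qed
  show ?thesis using K0 g0 main by blast
qed

lemma contD: "\<forall>x. (F has_real_derivative f x) (at x) \<Longrightarrow> continuous_on UNIV F"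
  by (metis DERIV_isCont continuous_at_imp_continuous_on)

lemma iconst: "(\<lambda>x. c::real) integrable_on {a..b::real}"
  by (rule integrable_continuous_interval) (rule continuous_on_const)

lemma perD:
  fixes F f :: "real \<Rightarrow> real"
  shows "\<forall>t. F (t + T) = F t \<Longrightarrow> \<forall>t. F (t + T) = F t" by simp

theorem mainTheorem1:
  fixes T \<alpha> \<beta> :: real and \<phi> :: "real \<Rightarrow> real"
  assumes "T > 0" and "\<alpha> > 0" and "\<beta> < 0"
    and "continuous_on UNIV \<phi>"
    and "\<forall>t. \<phi> (t + T) = \<phi> t"
    and "integral {0..T} \<phi> = 0"
    and "(1 / T) * integral {0..T} (\<lambda>\<tau>. (integral {0..\<tau>} \<phi>)\<^sup>2)
           > ((1 / T) * integral {0..T} (\<lambda>\<tau>. \<tau> * \<phi> \<tau>))\<^sup>2 - \<beta>"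
  shows "\<exists>\<mu>0>0. \<forall>\<mu>. 0 < \<mu> \<and> \<mu> \<le> \<mu>0 \<longrightarrow>
           zero_asympt_stable (\<alpha> * \<mu>) (\<lambda>t. \<beta> * \<mu>\<^sup>2 + \<mu> * \<phi> t)"
proof -
  note T = assms(1) and al = assms(2)
  obtain \<Phi> where dPhi: "\<forall>x. (\<Phi> has_real_derivative \<phi> x) (at x)"
      and perPhi: "\<forall>t. \<Phi> (t + T) = \<Phi> t" and Phi0: "\<Phi> 0 = 0"
    using periodic_antideriv[OF assms(1,4,5,6)] by blast
  have cPhi: "continuous_on UNIV \<Phi>" by (rule contD[OF dPhi])
  have PhiT: "\<Phi> T = 0" using perPhi[rule_format, of 0] Phi0 by simp
  have intphi: "integral {0..\<tau>} \<phi> = \<Phi> \<tau>" if "\<tau> \<ge> 0" for \<tau>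
    using integral_unique[OF ftc_real[OF that dPhi]] Phi0 by simp
  have iPhi: "(\<lambda>t. \<Phi> t) integrable_on {0..T}"
    by (rule integrable_continuous_interval) (use cPhi continuous_on_subset in blast)
  have iPhi2: "(\<lambda>t. (\<Phi> t)^2) integrable_on {0..T}"
    by (rule integrable_continuous_interval) (use cPhi in \<open>auto intro!: continuous_intros intro: continuous_on_subset\<close>)
  have itphi: "(\<lambda>t. t * \<phi> t) integrable_on {0..T}"
    by (rule integrable_continuous_interval) (use assms(4) in \<open>auto intro!: continuous_intros intro: continuous_on_subset\<close>)
  define I1 where "I1 = integral {0..T} \<Phi>"
  define I2 where "I2 = integral {0..T} (\<lambda>t. (\<Phi> t)^2)"
  have ibp: "I1 + integral {0..T} (\<lambda>t. t * \<phi> t) = 0"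
  proof -
    have d: "\<forall>x. ((\<lambda>t. t * \<Phi> t) has_real_derivative (\<Phi> x + x * \<phi> x)) (at x)"
    proof
      fix x
      show "((\<lambda>t. t * \<Phi> t) has_real_derivative (\<Phi> x + x * \<phi> x)) (at x)"
        by (rule DERIV_cong[OF DERIV_mult[OF DERIV_ident dPhi[rule_format, of x]]]) simp
    qed
    have "((\<lambda>x. \<Phi> x + x * \<phi> x) has_integral (T * \<Phi> T - 0 * \<Phi> 0)) {0..T}"
      using ftc_real[OF _ d, of 0 T] T by simp
    then have "integral {0..T} (\<lambda>x. \<Phi> x + x * \<phi> x) = 0" using PhiT by (simp add: integral_unique)
    moreover have "integral {0..T} (\<lambda>x. \<Phi> x + x * \<phi> x) = I1 + integral {0..T} (\<lambda>t. t * \<phi> t)"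
      unfolding I1_def by (rule integral_add[OF iPhi itphi])
    ultimately show ?thesis by simp
  qed
  define m where "m = I1 / T"
  define \<Psi> where "\<Psi> = (\<lambda>t. \<Phi> t - m)"
  have dPsi: "\<forall>x. (\<Psi> has_real_derivative \<phi> x) (at x)"
    unfolding \<Psi>_def using dPhi DERIV_diff[OF _ DERIV_const] by fastforce
  have cPsi: "continuous_on UNIV \<Psi>" by (rule contD[OF dPsi])
  have perPsi: "\<forall>t. \<Psi> (t + T) = \<Psi> t" unfolding \<Psi>_def using perPhi by simp
  have intPsi: "integral {0..T} \<Psi> = 0"
  proof -
    have "integral {0..T} \<Psi> = I1 - integral {0..T} (\<lambda>t. m)"
      unfolding \<Psi>_def I1_def by (rule integral_diff[OF iPhi iconst])
    also have "\<dots> = 0" using T unfolding m_def by simp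
    finally show ?thesis .
  qed
  define s where "s = integral {0..T} (\<lambda>t. (\<Psi> t)^2) / T"
  have Is: "integral {0..T} (\<lambda>t. (\<Psi> t)^2) = I2 - 2*m*I1 + m^2*T"
  proof -
    have "integral {0..T} (\<lambda>t. (\<Psi> t)^2) = integral {0..T} (\<lambda>t. ((\<Phi> t)^2 - (2*m) * \<Phi> t) + m^2)"
      unfolding \<Psi>_def by (rule integral_cong) (simp add: power2_eq_square algebra_simps)
    also have "\<dots> = integral {0..T} (\<lambda>t. (\<Phi> t)^2 - (2*m) * \<Phi> t) + integral {0..T} (\<lambda>t. m^2)"
      by (rule integral_add) (use iPhi iPhi2 in \<open>auto intro!: integrable_diff integrable_on_mult_right iconst\<close>)
    also have "integral {0..T} (\<lambda>t. (\<Phi> t)^2 - (2*m) * \<Phi> t) = I2 - 2*m*I1"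
      unfolding I2_def I1_def
      by (subst integral_diff) (use iPhi iPhi2 in \<open>auto intro!: integrable_on_mult_right\<close>)
    finally show ?thesis using T by simp
  qed
  have hyp: "I2 / T > m^2 - \<beta>"
  proof -
    have "integral {0..T} (\<lambda>\<tau>. (integral {0..\<tau>} \<phi>)\<^sup>2) = I2"
      unfolding I2_def by (rule integral_cong) (simp add: intphi)
    moreover have "integral {0..T} (\<lambda>\<tau>. \<tau> * \<phi> \<tau>) = - I1" using ibp by simp
    ultimately have "(1/T) * I2 > ((1/T) * (-I1))^2 - \<beta>" using assms(7) by simp
    moreover have "((1/T) * (-I1))^2 = m^2" unfolding m_def by (simp add: power2_eq_square)
    ultimately show ?thesis by simp
  qed
  define k where "k = \<beta> + s"
  have k0: "k > 0"
  proof -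
    have "s = I2/T - 2*m*(I1/T) + m^2" unfolding s_def Is using T by (simp add: field_simps)
    also have "\<dots> = I2/T - m^2" unfolding m_def by (simp add: power2_eq_square)
    finally show ?thesis unfolding k_def using hyp by simp
  qed
  obtain G1 where dG1: "\<forall>x. (G1 has_real_derivative \<Psi> x) (at x)" and perG1: "\<forall>t. G1 (t + T) = G1 t"
    using periodic_antideriv[OF T cPsi perPsi intPsi] by blast
  have cPsi2: "continuous_on UNIV (\<lambda>t. (\<Psi> t)^2 - s)" using cPsi by (intro continuous_intros)
  have perPsi2: "\<forall>t. (\<lambda>t. (\<Psi> t)^2 - s) (t + T) = (\<lambda>t. (\<Psi> t)^2 - s) t" using perPsi by simp
  have intPsi2: "integral {0..T} (\<lambda>t. (\<Psi> t)^2 - s) = 0"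
  proof -
    have ip: "(\<lambda>t. (\<Psi> t)^2) integrable_on {0..T}"
      by (rule integrable_continuous_interval) (use cPsi in \<open>auto intro!: continuous_intros intro: continuous_on_subset\<close>)
    have "integral {0..T} (\<lambda>t. (\<Psi> t)^2 - s) = integral {0..T} (\<lambda>t. (\<Psi> t)^2) - integral {0..T} (\<lambda>t. s)"
      by (rule integral_diff[OF ip iconst])
    also have "\<dots> = 0" using T unfolding s_def by simp
    finally show ?thesis .
  qed
  obtain G2 where dG2: "\<forall>x. (G2 has_real_derivative (\<Psi> x)^2 - s) (at x)" and perG2: "\<forall>t. G2 (t + T) = G2 t"
    using periodic_antideriv[OF T cPsi2 perPsi2 intPsi2] by blast
  have cG1: "continuous_on UNIV G1" by (rule contD[OF dG1])
  have cG2: "continuous_on UNIV G2" by (rule contD[OF dG2])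
  define c where "c = \<alpha>*k/(k+\<alpha>^2)"
  have c0: "c > 0" unfolding c_def using al k0 by (intro divide_pos_pos mult_pos_pos add_pos_pos) auto
  have kp: "k + \<alpha>^2 > 0" using k0 by (simp add: add_pos_nonneg)
  have ca: "c < \<alpha>"
  proof -
    have "k < k + \<alpha>^2" using al by simp
    then have "\<alpha>*k < \<alpha>*(k + \<alpha>^2)" using al by (rule mult_strict_left_mono)
    then have "\<alpha>*k < \<alpha>*(k + \<alpha>^2)" .
    then show ?thesis unfolding c_def using kp by (simp add: pos_divide_less_eq mult.commute)
  qed
  have cak: "c*\<alpha> \<le> k"
  proof -
    have "c*\<alpha> = (k*\<alpha>^2)/(k + \<alpha>^2)" unfolding c_def by (simp add: power2_eq_square)
    also have "\<dots> \<le> k"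
    proof -
      have "k*\<alpha>^2 \<le> k*(k + \<alpha>^2)" using k0 by (intro mult_left_mono) auto
      then show ?thesis using kp by (simp add: pos_divide_le_eq mult.commute)
    qed
    finally show ?thesis .
  qed
  obtain \<epsilon> where e0: "\<epsilon> > 0" and e: "\<forall>y u. c*k*y^2 + c*\<alpha>*y*u + (2*\<alpha>-c)*u^2 \<ge> \<epsilon>*(y^2+u^2)"
  proof -
    have "(c*\<alpha>)^2 = (c*\<alpha>)*(c*\<alpha>)" by (simp add: power2_eq_square)
    also have "\<dots> \<le> (c*\<alpha>)*k" using cak c0 al by (intro mult_left_mono) auto
    also have "\<dots> = (c*k)*\<alpha>" by simp
    also have "\<dots> < (c*k)*(2*\<alpha>-c)" using ca c0 k0 by (intro mult_strict_left_mono) auto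
    also have "\<dots> \<le> 4*(c*k)*(2*\<alpha>-c)" using ca c0 k0 by simp
    finally have "(c*\<alpha>)^2 < 4*(c*k)*(2*\<alpha>-c)" .
    then show ?thesis using quad_pos[of "c*k" "2*\<alpha>-c" "c*\<alpha>"] c0 k0 ca that by auto
  qed
  obtain p where p0: "p > 0" and pp: "\<forall>y u. k*y^2 + c*y*u + 1*u^2 \<ge> p*(y^2+u^2)"
  proof -
    have "c^2 = c*c" by (simp add: power2_eq_square)
    also have "\<dots> < c*\<alpha>" using ca c0 by simp
    also have "\<dots> \<le> k" by (rule cak)
    also have "\<dots> < 4*k*1" using k0 by simp
    finally have "c^2 < 4*k*1" .
    then show ?thesis using quad_pos[of k 1 c] k0 that by auto
  qed
  define Pb where "Pb = \<bar>k\<bar> + \<bar>c\<bar> + \<bar>1\<bar>"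
  have pu: "\<forall>y u. k*y^2 + c*y*u + 1*u^2 \<le> Pb*(y^2+u^2)" unfolding Pb_def using quad_upper by blast
  obtain B where bP: "\<forall>t. \<bar>\<Psi> t\<bar> \<le> B" using periodic_bounded[OF T cPsi perPsi] by blast
  have "\<exists>M. \<forall>t. \<bar>(2*k - c*\<alpha>)*G1 t + c*G2 t\<bar> \<le> M"
    by (rule periodic_bounded[OF T]) (use cG1 cG2 perG1 perG2 in \<open>auto intro!: continuous_intros\<close>)
  then obtain M1 where M1: "\<forall>t. \<bar>(2*k - c*\<alpha>)*G1 t + c*G2 t\<bar> \<le> M1" by blast
  have "\<exists>M. \<forall>t. \<bar>G2 t - \<alpha>*G1 t\<bar> \<le> M"
    by (rule periodic_bounded[OF T]) (use cG1 cG2 perG1 perG2 in \<open>auto intro!: continuous_intros\<close>)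
  then obtain M2 where M2: "\<forall>t. \<bar>G2 t - \<alpha>*G1 t\<bar> \<le> M2" by blast
  have "\<exists>M. \<forall>t. \<bar>-2*G1 t\<bar> \<le> M"
    by (rule periodic_bounded[OF T]) (use cG1 perG1 in \<open>auto intro!: continuous_intros\<close>)
  then obtain M3 where M3: "\<forall>t. \<bar>-2*G1 t\<bar> \<le> M3" by blast
  have "\<exists>M. \<forall>t. \<bar>\<alpha>*\<Psi> t - \<beta> - (\<Psi> t)^2\<bar> \<le> M"
    by (rule periodic_bounded[OF T]) (use cPsi perPsi in \<open>auto intro!: continuous_intros\<close>)
  then obtain M4 where M4: "\<forall>t. \<bar>\<alpha>*\<Psi> t - \<beta> - (\<Psi> t)^2\<bar> \<le> M4" by blast
  have "\<exists>M. \<forall>t. \<bar>\<Psi> t - \<alpha>\<bar> \<le> M"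
    by (rule periodic_bounded[OF T]) (use cPsi perPsi in \<open>auto intro!: continuous_intros\<close>)
  then obtain M5 where M5: "\<forall>t. \<bar>\<Psi> t - \<alpha>\<bar> \<le> M5" by blast
  define M where "M = \<bar>M1\<bar> + \<bar>M2\<bar> + \<bar>M3\<bar> + \<bar>M4\<bar> + \<bar>M5\<bar> + \<bar>B\<bar> + 1"
  have M1': "\<bar>M1\<bar> \<le> M" "\<bar>M2\<bar> \<le> M" "\<bar>M3\<bar> \<le> M" "\<bar>M4\<bar> \<le> M" "\<bar>M5\<bar> \<le> M" "\<bar>B\<bar> \<le> M" "1 \<le> M"
    unfolding M_def by auto
  have bQ: "\<forall>t. \<bar>(2*k - c*\<alpha>)*G1 t + c*G2 t\<bar> \<le> M \<and> \<bar>G2 t - \<alpha>*G1 t\<bar> \<le> M \<and> \<bar>-2*G1 t\<bar> \<le> M"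
    using M1 M2 M3 M1' by (meson abs_ge_self order_trans)
  have bB: "\<forall>t. \<bar>-\<Psi> t\<bar> \<le> M \<and> \<bar>\<alpha>*\<Psi> t - \<beta> - (\<Psi> t)^2\<bar> \<le> M \<and> \<bar>\<Psi> t - \<alpha>\<bar> \<le> M \<and> \<bar>1::real\<bar> \<le> M"
    using M4 M5 bP M1' by (metis abs_ge_self abs_minus_cancel abs_one order_trans)
  have Mpos: "M > 0" using M1' by simp
  define \<mu>0 where "\<mu>0 = min ((\<epsilon>/2)/(8*M^2)) ((p/2)/(2*M))"
  have mu00: "\<mu>0 > 0" unfolding \<mu>0_def using e0 p0 Mpos by simp
  show ?thesis
  proof (intro exI[of _ \<mu>0] conjI allI impI mu00)
    fix \<mu> :: real assume mu: "0 < \<mu> \<and> \<mu> \<le> \<mu>0"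
    have s1: "\<mu>*(8*M^2) \<le> \<epsilon>/2"
    proof -
      have "\<mu> \<le> (\<epsilon>/2)/(8*M^2)" using mu unfolding \<mu>0_def by simp
      then show ?thesis using Mpos by (simp add: pos_le_divide_eq)
    qed
    have s2: "\<mu>*(2*M) \<le> p/2"
    proof -
      have "\<mu> \<le> (p/2)/(2*M)" using mu unfolding \<mu>0_def by simp
      then show ?thesis using Mpos by (simp add: pos_le_divide_eq)
    qed
    obtain K \<gamma> where "K > 0" "\<gamma> > 0" and H: "\<forall>t0 y v. lin2_solution (\<alpha>*\<mu>) (\<lambda>t. \<beta>*\<mu>^2 + \<mu>*\<phi> t) t0 y v \<longrightarrow>
           (\<forall>t\<ge>t0. (y t)^2 + (v t)^2 \<le> K * ((y t0)^2 + (v t0)^2) * exp (- \<gamma> * (t - t0)))"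
      using core[OF dPsi dG1 dG2 k_def[unfolded] _ bP bQ bB e0 e p0 pp pu s1 s2] mu by blast
    then show "zero_asympt_stable (\<alpha> * \<mu>) (\<lambda>t. \<beta> * \<mu>\<^sup>2 + \<mu> * \<phi> t)"
      by (intro expstab_imp) auto
  qed
qed

end
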